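(* Let $J$ be an abelian topological semigroup with identity $0$ and $X$ a topological vector space over $\mathbf{C}$. If $\phi\in P^n(J,X)$ and there is $k$ with $0\le k<n$ such that $\phi(ms)=m^k\phi(s)$ for all $m\in\mathbf{Z}_+$ and $s\in J$, then $\phi\in P^k(J,X)$.
   Context: $\mathbf{Z}_+=\{0,1,2,\dots\}$. A continuous $p:J\to X$ is a polynomial of degree at most $n$ if for all $s,t\in J$ the map $m\mapsto p(s+mt)$, $m\in\mathbf{Z}_+$, is a polynomial in $m$ of degree at most $n$ with coefficients in $X$; $P^n(J,X)$ is the space of such polynomials. *)

theory Defs
  imports "HOL-Analysis.Analysis"
begin

definition complex_tvs :: "(complex \<Rightarrow> 'x::{ab_group_add,topological_space} \<Rightarrow> 'x) \<Rightarrow> bool" where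
  "complex_tvs sc \<longleftrightarrow> vector_space sc
     \<and> continuous_on UNIV (\<lambda>(x::'x, y::'x). x + y)
     \<and> continuous_on UNIV (\<lambda>(c::complex, x::'x). sc c x)"

definition natmul :: "nat \<Rightarrow> 'j::comm_monoid_add \<Rightarrow> 'j" where
  "natmul m t = (\<Sum>i<m. t)"

definition Ppoly :: "(complex \<Rightarrow> 'x::{ab_group_add,topological_space} \<Rightarrow> 'x) \<Rightarrow> nat
      \<Rightarrow> ('j::{comm_monoid_add,topological_space} \<Rightarrow> 'x) set" where
  "Ppoly sc n = {p. continuous_on UNIV p \<and>
     (\<forall>s t. \<exists>a::nat \<Rightarrow> 'x. \<forall>m::nat.
        p (s + natmul m t) = (\<Sum>j\<le>n. sc ((of_nat m) ^ j) (a j)))}"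

end

theory Submission
  imports Defs "HOL-Computational_Algebra.Polynomial"
begin

definition Lg :: "nat \<Rightarrow> nat \<Rightarrow> complex poly" where
  "Lg N i = (\<Prod>k\<in>{..N}-{i}. smult (1 / (of_nat i - of_nat k)) [:- of_nat k, 1:])"

lemma Lg_eval: "i \<le> N \<Longrightarrow> r \<le> N \<Longrightarrow> poly (Lg N i) (of_nat r) = (if r = i then 1 else 0)"
proof (cases "r = i")
  case True
  have "poly (Lg N i) (of_nat r) = (\<Prod>k\<in>{..N}-{i}. (of_nat i - of_nat k) / (of_nat i - of_nat k :: complex))"
    using True by (simp add: Lg_def poly_prod diff_divide_distrib[symmetric])
  also have "\<dots> = 1" by (intro prod.neutral) (auto simp: of_nat_eq_iff)
  finally show ?thesis using True by simp
next
  case False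
  assume "i \<le> N" "r \<le> N"
  hence "r \<in> {..N}-{i}" using False by auto
  thus ?thesis using False unfolding Lg_def poly_prod
    by (intro trans[OF prod_zero]) (auto intro!: bexI[of _ r])
qed

lemma Lg_degree: "degree (Lg N i) \<le> N" if "i \<le> N"
proof -
  have "degree (Lg N i) \<le> sum (degree \<circ> (\<lambda>k. smult (1 / (of_nat i - of_nat k)) [:- of_nat k, 1::complex:])) ({..N}-{i})"
    unfolding Lg_def by (rule degree_prod_sum_le) auto
  also have "\<dots> \<le> sum (\<lambda>_. 1) ({..N}-{i})"
    by (intro sum_mono) auto
  also have "\<dots> \<le> N" using that by simp
  finally show ?thesis .
qed

lemma vdm_inverse:
  "\<exists>W::nat\<Rightarrow>nat\<Rightarrow>complex. \<forall>l\<le>N. \<forall>j\<le>N. (\<Sum>i\<le>N. W l i * of_nat i ^ j) = (if l = j then 1 else 0)"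
proof (intro exI allI impI)
  fix l j assume l: "l \<le> N" and j: "j \<le> N"
  define q where "q = (\<Sum>i\<le>N. smult (of_nat i ^ j) (Lg N i))"
  have "q = monom 1 j"
  proof (rule poly_eqI_degree[of "of_nat ` {..N}"])
    fix x :: complex assume "x \<in> of_nat ` {..N}"
    then obtain r where r: "r \<le> N" "x = of_nat r" by auto
    have "poly q x = (\<Sum>i\<le>N. of_nat i ^ j * (if r = i then 1 else 0))"
      using r by (simp add: q_def poly_sum Lg_eval)
    also have "\<dots> = (\<Sum>i\<le>N. if r = i then of_nat r ^ j else 0)"
      by (intro sum.cong) auto
    also have "\<dots> = of_nat r ^ j" using r by (simp add: sum.delta)
    finally show "poly q x = poly (monom 1 j) x" using r by (simp add: poly_monom)
  next
    have c: "card (of_nat ` {..N} :: complex set) = Suc N"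
      by (subst card_image) (auto simp: inj_on_def)
    have "degree q \<le> N" unfolding q_def
      by (intro degree_sum_le) (auto intro: order.trans[OF degree_smult_le] Lg_degree)
    thus "degree q < card (of_nat ` {..N} :: complex set)" using c by simp
    show "degree (monom (1::complex) j) < card (of_nat ` {..N} :: complex set)"
      using c j by (simp add: degree_monom_eq)
  qed
  hence "coeff q l = (if l = j then 1 else 0)" by (simp add: coeff_monom)
  thus "(\<Sum>i\<le>N. coeff (Lg N i) l * of_nat i ^ j) = (if l = j then 1 else 0)"
    by (simp add: q_def coeff_sum mult.commute)
qed

lemma coeffs_extraction:
  fixes sc :: "complex \<Rightarrow> 'x::ab_group_add \<Rightarrow> 'x"
  assumes "module sc"
  shows "\<exists>W::nat\<Rightarrow>nat\<Rightarrow>complex. \<forall>v::nat\<Rightarrow>'x::ab_group_add. \<forall>l\<le>N.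
     (\<Sum>i\<le>N. sc (W l i) (\<Sum>j\<le>N. sc (of_nat i ^ j) (v j))) = v l"
proof -
  interpret module sc by fact
  obtain W :: "nat \<Rightarrow> nat \<Rightarrow> complex" where W: "\<forall>l\<le>N. \<forall>j\<le>N. (\<Sum>i\<le>N. W l i * of_nat i ^ j) = (if l = j then 1 else 0)"
    using vdm_inverse by blast
  show ?thesis
  proof (intro exI allI impI)
    fix v :: "nat \<Rightarrow> 'x" and l assume l: "l \<le> N"
    have "(\<Sum>i\<le>N. sc (W l i) (\<Sum>j\<le>N. sc (of_nat i ^ j) (v j)))
        = (\<Sum>i\<le>N. \<Sum>j\<le>N. sc (W l i * of_nat i ^ j) (v j))"
      by (simp add: scale_sum_right)
    also have "\<dots> = (\<Sum>j\<le>N. \<Sum>i\<le>N. sc (W l i * of_nat i ^ j) (v j))"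
      by (rule sum.swap)
    also have "\<dots> = (\<Sum>j\<le>N. sc (\<Sum>i\<le>N. W l i * of_nat i ^ j) (v j))"
      by (simp add: scale_sum_left)
    also have "\<dots> = (\<Sum>j\<le>N. if l = j then v j else 0)"
      using W l by (intro sum.cong) auto
    also have "\<dots> = v l" using l by (simp add: sum.delta)
    finally show "(\<Sum>i\<le>N. sc (W l i) (\<Sum>j\<le>N. sc (of_nat i ^ j) (v j))) = v l" .
  qed
qed

lemma uniq:
  fixes sc :: "complex \<Rightarrow> 'x::ab_group_add \<Rightarrow> 'x"
  assumes "module sc"
    and "\<forall>m::nat. (\<Sum>j\<le>N. sc (of_nat m ^ j) (u j)) = (\<Sum>j\<le>N. sc (of_nat m ^ j) ((u'::nat\<Rightarrow>'x::ab_group_add) j))"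
    and "l \<le> N"
  shows "u l = u' l"
proof -
  obtain W where W: "\<forall>v::nat\<Rightarrow>'x. \<forall>l\<le>N.
     (\<Sum>i\<le>N. sc (W l i) (\<Sum>j\<le>N. sc (of_nat i ^ j) (v j))) = v l"
    using coeffs_extraction[OF assms(1), where N=N] by blast
  show ?thesis using W[rule_format, of l u] W[rule_format, of l u'] assms(2,3) by simp
qed

lemma natmul_Suc: "natmul (Suc l) x = x + natmul l x"
  by (simp add: natmul_def add.commute)

lemma natmul_0: "natmul 0 x = 0"
  by (simp add: natmul_def)

lemma natmul_plus: "natmul (a + b) t = natmul a t + natmul b t"
  by (induction a) (simp_all add: natmul_Suc natmul_0 add_ac)

lemma natmul_add: "natmul l (x + y) = natmul l x + natmul l y"
  by (simp add: natmul_def sum.distrib)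

lemma natmul_mult: "natmul l (natmul m t) = natmul (l * m) t"
  by (induction l) (simp_all add: natmul_Suc natmul_0 natmul_plus)

lemma natmul_one: "natmul 1 x = x" "natmul (Suc 0) x = x"
  by (simp_all add: natmul_def)

lemma sum_if_add:
  fixes f :: "nat \<Rightarrow> 'a::comm_monoid_add"
  assumes "k \<le> n"
  shows "(\<Sum>i\<le>n. if i + j = k then f i else 0) = (if j \<le> k then f (k - j) else 0)"
proof -
  have "(\<Sum>i\<le>n. if i + j = k then f i else 0) = (\<Sum>i\<le>n. if i = k - j then (if j \<le> k then f i else 0) else 0)"
    by (intro sum.cong) auto
  also have "\<dots> = (if j \<le> k then f (k - j) else 0)" using assms by (auto simp: sum.delta)
  finally show ?thesis .
qed

theorem lemma2p2:
  fixes sc :: "complex \<Rightarrow> 'x::{ab_group_add,topological_space} \<Rightarrow> 'x"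
    and phi :: "'j::topological_comm_monoid_add \<Rightarrow> 'x"
    and n k :: nat
  assumes "complex_tvs sc"
    and "phi \<in> Ppoly sc n"
    and "k < n"
    and "\<forall>m::nat. \<forall>s. phi (natmul m s) = sc ((of_nat m) ^ k) (phi s)"
  shows "phi \<in> Ppoly sc k"
proof -
  have vs: "vector_space sc" using assms(1) by (simp add: complex_tvs_def)
  interpret vector_space sc by (rule vs)
  have md: "module sc" by unfold_locales
  have sc_if: "\<And>a c x. sc a (if c then x else 0) = (if c then sc a x else 0)" by simp
  have cont: "continuous_on UNIV phi" and P: "\<And>s t. \<exists>a::nat \<Rightarrow> 'x. \<forall>m::nat.
        phi (s + natmul m t) = (\<Sum>j\<le>n. sc ((of_nat m) ^ j) (a j))"
    using assms(2) by (auto simp: Ppoly_def)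
  have "\<exists>a::nat \<Rightarrow> 'x. \<forall>m::nat. phi (s + natmul m t) = (\<Sum>j\<le>k. sc ((of_nat m) ^ j) (a j))" for s t
  proof -
    define F where "F l m = phi (natmul l s + natmul m t)" for l m
    obtain b where b: "\<And>l m. F l m = (\<Sum>j\<le>n. sc (of_nat m ^ j) (b l j))"
      using P[of "natmul _ s" t] unfolding F_def by metis
    obtain c where c: "\<And>m l. F l m = (\<Sum>i\<le>n. sc (of_nat l ^ i) (c m i))"
      using P[of "natmul _ t" s] unfolding F_def by (metis add.commute)
    obtain W where W: "\<forall>v::nat\<Rightarrow>'x. \<forall>l\<le>n.
       (\<Sum>i\<le>n. sc (W l i) (\<Sum>j\<le>n. sc (of_nat i ^ j) (v j))) = v l"
      using coeffs_extraction[OF md, where N=n] by blast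
    define d where "d j i = (\<Sum>m\<le>n. sc (W j m) (c m i))" for j i
    have bd: "b l j = (\<Sum>i\<le>n. sc (of_nat l ^ i) (d j i))" if "j \<le> n" for l j
    proof -
      have "b l j = (\<Sum>m\<le>n. sc (W j m) (F l m))"
        using W[rule_format, of j "b l"] that b by simp
      also have "\<dots> = (\<Sum>m\<le>n. \<Sum>i\<le>n. sc (W j m * of_nat l ^ i) (c m i))"
        by (simp add: c scale_sum_right)
      also have "\<dots> = (\<Sum>i\<le>n. \<Sum>m\<le>n. sc (W j m * of_nat l ^ i) (c m i))"
        by (rule sum.swap)
      also have "\<dots> = (\<Sum>i\<le>n. sc (of_nat l ^ i) (d j i))"
        by (simp add: d_def scale_sum_right mult.commute)
      finally show ?thesis .
    qed
    define u where "u m p = (\<Sum>j\<le>n. \<Sum>i\<le>n. if i + j = p then sc (of_nat m ^ j) (d j i) else 0)" for m p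
    have key: "F l (l * m) = (\<Sum>p\<le>2*n. sc (of_nat l ^ p) (u m p))" for l m
    proof -
      have "F l (l * m) = (\<Sum>j\<le>n. \<Sum>i\<le>n. sc (of_nat l ^ (i + j)) (sc (of_nat m ^ j) (d j i)))"
        by (simp add: b bd scale_sum_right power_add power_mult_distrib mult_ac)
      also have "\<dots> = (\<Sum>j\<le>n. \<Sum>i\<le>n. \<Sum>p\<le>2*n. if i + j = p then sc (of_nat l ^ p) (sc (of_nat m ^ j) (d j i)) else 0)"
        by (intro sum.cong refl) (simp add: sum.delta)
      also have "\<dots> = (\<Sum>j\<le>n. \<Sum>p\<le>2*n. \<Sum>i\<le>n. if i + j = p then sc (of_nat l ^ p) (sc (of_nat m ^ j) (d j i)) else 0)"
        by (intro sum.cong refl sum.swap)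
      also have "\<dots> = (\<Sum>p\<le>2*n. \<Sum>j\<le>n. \<Sum>i\<le>n. if i + j = p then sc (of_nat l ^ p) (sc (of_nat m ^ j) (d j i)) else 0)"
        by (rule sum.swap)
      also have "\<dots> = (\<Sum>p\<le>2*n. sc (of_nat l ^ p) (u m p))"
        by (simp add: u_def scale_sum_right sc_if)
      finally show ?thesis .
    qed
    have key2: "F l (l * m) = (\<Sum>p\<le>2*n. sc (of_nat l ^ p) (if p = k then F 1 m else 0))" for l m
    proof -
      have "F l (l * m) = phi (natmul l (s + natmul m t))"
        by (simp add: F_def natmul_add natmul_mult)
      also have "\<dots> = sc (of_nat l ^ k) (F 1 m)"
        using assms(4) by (simp add: F_def natmul_one)
      also have "\<dots> = (\<Sum>p\<le>2*n. sc (of_nat l ^ p) (if p = k then F 1 m else 0))"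
        using assms(3) by (simp add: sc_if sum.delta')
      finally show ?thesis .
    qed
    have um: "u m k = F 1 m" for m
      using uniq[OF md, where N="2*n" and u="u m" and u'="\<lambda>p. if p = k then F 1 m else 0" and l=k] key key2 assms(3) by simp
    have "u m k = (\<Sum>j\<le>k. sc (of_nat m ^ j) (d j (k - j)))" for m
    proof -
      have "u m k = (\<Sum>j\<le>n. if j \<le> k then sc (of_nat m ^ j) (d j (k - j)) else 0)"
        unfolding u_def using assms(3)
        by (intro sum.cong refl) (rule sum_if_add, simp)
      also have "\<dots> = (\<Sum>j\<le>k. sc (of_nat m ^ j) (d j (k - j)))"
        using assms(3) by (simp add: sum.inter_filter[symmetric]) (intro sum.cong, auto)
      finally show ?thesis .
    qed
    thus ?thesis using um by (auto simp: F_def natmul_one)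
  qed
  thus ?thesis using cont by (auto simp: Ppoly_def)
qed

end
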